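(* The only $F$-norm $\|\cdot\|_F$ on $\mathbb{R}^{d+1}$ satisfying $\|\cdot\|_F*\|\cdot\|_F=\|\cdot\|_F$ is the sup-norm $\|\mathbf{x}\|_\infty=\max_{0\le i\le d}|x_i|$.
   Context: Condition $(\mathcal{H})$ on a random vector $\mathbf{X}=(X_1,\dots,X_d)$: each $X_i$ is almost surely nonnegative with $0<E(X_i)<\infty$. For such $\mathbf{X}$ with distribution function $F$, the $F$-norm is $\|\mathbf{x}\|_F=E(\max(|x_0|,|x_1|X_1,\dots,|x_d|X_d))$, $\mathbf{x}\in\mathbb{R}^{d+1}$; an $F$-norm is any norm on $\mathbb{R}^{d+1}$ of this form. The product $\|\cdot\|_F*\|\cdot\|_G$ is the $F$-norm generated by $(X_1Y_1,\dots,X_dY_d)$ where $\mathbf{X}\sim F$ and $\mathbf{Y}\sim G$ are independent and satisfy $(\mathcal{H})$. *)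

theory Defs
  imports "HOL-Probability.Probability"
begin

text \<open>A random vector (X_1,...,X_d) is represented by its distribution P, a measure on
  the product space of functions indexed by {1..d}. A point of R^(d+1) is a function
  x :: nat => real of which only the values x 0, ..., x d matter.\<close>

definition vec_space :: "nat \<Rightarrow> (nat \<Rightarrow> real) measure" where
  "vec_space d = PiM {1..d} (\<lambda>_. borel)"

definition cond_H :: "nat \<Rightarrow> (nat \<Rightarrow> real) measure \<Rightarrow> bool" where
  "cond_H d P \<longleftrightarrow> prob_space P \<and> sets P = sets (vec_space d) \<and>
     (\<forall>i\<in>{1..d}. (AE z in P. 0 \<le> z i) \<and> integrable P (\<lambda>z. z i) \<and>
                   0 < (\<integral>z. z i \<partial>P))"

definition F_norm :: "nat \<Rightarrow> (nat \<Rightarrow> real) measure \<Rightarrow> (nat \<Rightarrow> real) \<Rightarrow> real" where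
  "F_norm d P x = (\<integral>z. Max (insert \<bar>x 0\<bar> ((\<lambda>i. \<bar>x i\<bar> * z i) ` {1..d})) \<partial>P)"

definition prod_dist :: "nat \<Rightarrow> (nat \<Rightarrow> real) measure \<Rightarrow> (nat \<Rightarrow> real) measure \<Rightarrow> (nat \<Rightarrow> real) measure" where
  "prod_dist d P Q = distr (P \<Otimes>\<^sub>M Q) (vec_space d) (\<lambda>(z, w). restrict (\<lambda>i. z i * w i) {1..d})"

definition sup_norm :: "nat \<Rightarrow> (nat \<Rightarrow> real) \<Rightarrow> real" where
  "sup_norm d x = Max ((\<lambda>i. \<bar>x i\<bar>) ` {0..d})"

end

theory Submission
  imports Defs
begin

lemma Fx_meas:
  "(\<lambda>v. Max (insert \<bar>x 0\<bar> ((\<lambda>i. \<bar>x i\<bar> * v i) ` {1..d}))) \<in> borel_measurable (vec_space d)"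
proof -
  have eq: "\<And>v. insert \<bar>x 0\<bar> ((\<lambda>i. \<bar>x i\<bar> * v i) ` {1..d})
     = (\<lambda>j. if j = 0 then \<bar>x 0\<bar> else \<bar>x j\<bar> * v j) ` {0..d}"
  proof -
    fix v
    have "{0..d} = insert 0 {1..d}" by auto
    then show "insert \<bar>x 0\<bar> ((\<lambda>i. \<bar>x i\<bar> * v i) ` {1..d})
     = (\<lambda>j. if j = 0 then \<bar>x 0\<bar> else \<bar>x j\<bar> * v j) ` {0..d}"
      by (auto simp: image_def)
  qed
  have "(\<lambda>v. Max ((\<lambda>j. if j = 0 then \<bar>x 0\<bar> else \<bar>x j\<bar> * v j) ` {0..d})) \<in> borel_measurable (vec_space d)"
  proof (rule borel_measurable_Max)
    fix j assume j: "j \<in> {0..d}"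
    show "(\<lambda>v. if j = 0 then \<bar>x 0\<bar> else \<bar>x j\<bar> * v j) \<in> borel_measurable (vec_space d)"
    proof (cases "j = 0")
      case False
      then have "j \<in> {1..d}" using j by auto
      then have "(\<lambda>v. v j) \<in> borel_measurable (vec_space d)"
        unfolding vec_space_def by (rule measurable_component_singleton)
      then show ?thesis using False by simp
    qed simp
  qed simp
  then show ?thesis unfolding eq .
qed

lemma phi_meas:
  assumes "sets P = sets (vec_space d)"
  shows "(\<lambda>(z, w). restrict (\<lambda>i. z i * w i) {1..d}) \<in> measurable (P \<Otimes>\<^sub>M P) (vec_space d)"
proof -
  have "(\<lambda>(z, w). restrict (\<lambda>i. z i * w i) {1..d}) \<in> measurable (vec_space d \<Otimes>\<^sub>M vec_space d) (vec_space d)"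
    unfolding vec_space_def case_prod_beta by measurable
  then show ?thesis
    by (subst measurable_cong_sets[OF sets_pair_measure_cong[OF assms assms] refl])
qed

lemma Max_ins_nonneg: "finite A \<Longrightarrow> 0 \<le> Max (insert \<bar>a::real\<bar> A)"
  by (rule order.trans[OF abs_ge_zero Max_ge]) auto

lemma F_P_nn:
  assumes "sets P = sets (vec_space d)"
  shows "F_norm d P x = enn2real (\<integral>\<^sup>+ z. ennreal (Max (insert \<bar>x 0\<bar> ((\<lambda>i. \<bar>x i\<bar> * z i) ` {1..d}))) \<partial>P)"
  unfolding F_norm_def
  by (rule integral_eq_nn_integral)
     (simp_all only: measurable_cong_sets[OF assms refl] Fx_meas, auto intro!: AE_I2 Max_ins_nonneg)

lemma F_prod_nn:
  assumes H: "cond_H d P"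
  shows "F_norm d (prod_dist d P P) x = enn2real (\<integral>\<^sup>+ z. \<integral>\<^sup>+ w. ennreal (Max (insert \<bar>x 0\<bar> ((\<lambda>i. \<bar>x i\<bar> * (z i * w i)) ` {1..d}))) \<partial>P \<partial>P)"
proof -
  have ps: "prob_space P" and sP: "sets P = sets (vec_space d)" using H by (auto simp: cond_H_def)
  interpret pair_sigma_finite P P
    using ps by (simp add: pair_sigma_finite_def prob_space_imp_sigma_finite)
  let ?phi = "\<lambda>(z, w). restrict (\<lambda>i. z i * w i) {1..d}"
  let ?F = "\<lambda>v. Max (insert \<bar>x 0\<bar> ((\<lambda>i. \<bar>x i\<bar> * v i) ` {1..d}))"
  let ?G = "\<lambda>(z::nat\<Rightarrow>real, w::nat\<Rightarrow>real). Max (insert \<bar>x 0\<bar> ((\<lambda>i. \<bar>x i\<bar> * (z i * w i)) ` {1..d}))"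
  have phim: "?phi \<in> measurable (P \<Otimes>\<^sub>M P) (vec_space d)" by (rule phi_meas[OF sP])
  have FG: "?F (?phi p) = ?G p" for p
  proof -
    obtain z w where p: "p = (z, w)" by (cases p)
    have "(\<lambda>i. \<bar>x i\<bar> * restrict (\<lambda>i. z i * w i) {1..d} i) ` {1..d} = (\<lambda>i. \<bar>x i\<bar> * (z i * w i)) ` {1..d}"
      by (rule image_cong) auto
    then show ?thesis by (simp add: p)
  qed
  have Gm: "?G \<in> borel_measurable (P \<Otimes>\<^sub>M P)"
  proof -
    have "(\<lambda>p. ?F (?phi p)) \<in> borel_measurable (P \<Otimes>\<^sub>M P)"
      by (rule measurable_compose[OF phim Fx_meas])
    then show ?thesis unfolding FG .
  qed
  have "F_norm d (prod_dist d P P) x = integral\<^sup>L (P \<Otimes>\<^sub>M P) (\<lambda>p. ?F (?phi p))"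
    unfolding F_norm_def prod_dist_def by (rule integral_distr[OF phim Fx_meas])
  also have "\<dots> = integral\<^sup>L (P \<Otimes>\<^sub>M P) ?G" unfolding FG ..
  also have "\<dots> = enn2real (\<integral>\<^sup>+ p. ennreal (?G p) \<partial>(P \<Otimes>\<^sub>M P))"
    by (rule integral_eq_nn_integral[OF Gm]) (auto intro!: AE_I2 Max_ins_nonneg split: prod.split)
  also have "(\<integral>\<^sup>+ p. ennreal (?G p) \<partial>(P \<Otimes>\<^sub>M P)) = (\<integral>\<^sup>+ z. \<integral>\<^sup>+ w. ennreal (?G (z, w)) \<partial>P \<partial>P)"
  proof -
    have "(\<lambda>p. ennreal (?G p)) \<in> borel_measurable (P \<Otimes>\<^sub>M P)" using Gm by measurable
    from sigma_finite_measure.nn_integral_fst[OF prob_space_imp_sigma_finite[OF ps] this] show ?thesis by simp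
  qed
  finally show ?thesis by simp
qed

lemma sup_norm_Max: "sup_norm d x = Max (insert \<bar>x 0\<bar> ((\<lambda>i. \<bar>x i\<bar>) ` {1..d}))"
proof -
  have "{0..d} = insert 0 {1..d}" by auto
  then show ?thesis unfolding sup_norm_def by simp
qed

lemma partA:
  assumes H: "cond_H d P" and AE1: "AE z in P. \<forall>i\<in>{1..d}. z i = 1"
  shows "F_norm d P x = sup_norm d x" "F_norm d (prod_dist d P P) x = sup_norm d x"
proof -
  have ps: "prob_space P" and sP: "sets P = sets (vec_space d)" using H by (auto simp: cond_H_def)
  have snn: "0 \<le> sup_norm d x" unfolding sup_norm_Max by (rule Max_ins_nonneg) simp
  have sp1: "emeasure P (space P) = 1" using ps by (simp add: prob_space.emeasure_space_1)
  have key: "(\<integral>\<^sup>+ z. ennreal (Max (insert \<bar>x 0\<bar> ((\<lambda>i. \<bar>x i\<bar> * z i) ` {1..d}))) \<partial>P) = ennreal (sup_norm d x)"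
  proof -
    have "(\<integral>\<^sup>+ z. ennreal (Max (insert \<bar>x 0\<bar> ((\<lambda>i. \<bar>x i\<bar> * z i) ` {1..d}))) \<partial>P) = (\<integral>\<^sup>+ z. ennreal (sup_norm d x) \<partial>P)"
    proof (rule nn_integral_cong_AE)
      show "AE z in P. ennreal (Max (insert \<bar>x 0\<bar> ((\<lambda>i. \<bar>x i\<bar> * z i) ` {1..d}))) = ennreal (sup_norm d x)"
        using AE1
      proof eventually_elim
        case (elim z)
        have "(\<lambda>i. \<bar>x i\<bar> * z i) ` {1..d} = (\<lambda>i. \<bar>x i\<bar>) ` {1..d}"
          by (rule image_cong) (use elim in auto)
        then show ?case by (simp add: sup_norm_Max)
      qed
    qed
    also have "\<dots> = ennreal (sup_norm d x)" by (simp add: sp1)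
    finally show ?thesis .
  qed
  show "F_norm d P x = sup_norm d x"
    unfolding F_P_nn[OF sP] key using snn by simp
  have inner: "(\<integral>\<^sup>+ w. ennreal (Max (insert \<bar>x 0\<bar> ((\<lambda>i. \<bar>x i\<bar> * (z i * w i)) ` {1..d}))) \<partial>P)
     = ennreal (Max (insert \<bar>x 0\<bar> ((\<lambda>i. \<bar>x i\<bar> * z i) ` {1..d})))" for z
  proof -
    have "(\<integral>\<^sup>+ w. ennreal (Max (insert \<bar>x 0\<bar> ((\<lambda>i. \<bar>x i\<bar> * (z i * w i)) ` {1..d}))) \<partial>P)
      = (\<integral>\<^sup>+ w. ennreal (Max (insert \<bar>x 0\<bar> ((\<lambda>i. \<bar>x i\<bar> * z i) ` {1..d}))) \<partial>P)"
    proof (rule nn_integral_cong_AE)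
      show "AE w in P. ennreal (Max (insert \<bar>x 0\<bar> ((\<lambda>i. \<bar>x i\<bar> * (z i * w i)) ` {1..d}))) = ennreal (Max (insert \<bar>x 0\<bar> ((\<lambda>i. \<bar>x i\<bar> * z i) ` {1..d})))"
        using AE1
      proof eventually_elim
        case (elim w)
        have "(\<lambda>i. \<bar>x i\<bar> * (z i * w i)) ` {1..d} = (\<lambda>i. \<bar>x i\<bar> * z i) ` {1..d}"
          by (rule image_cong) (use elim in auto)
        then show ?case by simp
      qed
    qed
    also have "\<dots> = ennreal (Max (insert \<bar>x 0\<bar> ((\<lambda>i. \<bar>x i\<bar> * z i) ` {1..d})))" by (simp add: sp1)
    finally show ?thesis .
  qed
  show "F_norm d (prod_dist d P P) x = sup_norm d x"
    unfolding F_prod_nn[OF H] inner key using snn by simp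
qed

lemma zi_meas:
  assumes sP: "sets P = sets (vec_space d)" and i: "i \<in> {1..d}"
  shows "(\<lambda>z. z i) \<in> borel_measurable P"
proof -
  have "(\<lambda>z. z i) \<in> borel_measurable (vec_space d)"
    unfolding vec_space_def using i by (rule measurable_component_singleton)
  then show ?thesis by (subst measurable_cong_sets[OF sP refl])
qed

lemma le1_to_eq1:
  assumes H: "cond_H d P" and i: "i \<in> {1..d}" and le: "AE z in P. z i \<le> 1"
    and int1: "(\<integral>z. z i \<partial>P) = 1"
  shows "AE z in P. z i = 1"
proof -
  have ps: "prob_space P" and sP: "sets P = sets (vec_space d)"
    and intg: "integrable P (\<lambda>z. z i)" using H i by (auto simp: cond_H_def)
  interpret prob_space P by (rule ps)
  have ig: "integrable P (\<lambda>z. 1 - z i)" using intg by simp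
  have "(\<integral>z. 1 - z i \<partial>P) = 0" using intg int1 by (simp add: prob_space)
  moreover have "(\<integral>z. 1 - z i \<partial>P) = 0 \<longleftrightarrow> (AE z in P. 1 - z i = 0)"
    by (rule integral_nonneg_eq_0_iff_AE[OF ig]) (use le in auto)
  ultimately show ?thesis by auto
qed

lemma Max_ei:
  fixes x :: "nat \<Rightarrow> real"
  assumes i: "i \<in> {1..d}" and t: "0 \<le> t" and x0: "x 0 = t" and xi: "x i = 1"
    and xo: "\<And>j. j \<noteq> 0 \<Longrightarrow> j \<noteq> i \<Longrightarrow> x j = 0"
  shows "Max (insert \<bar>x 0\<bar> ((\<lambda>j. \<bar>x j\<bar> * v j) ` {1..d})) = max t (v i)"
proof (rule Max_eqI)
  show "finite (insert \<bar>x 0\<bar> ((\<lambda>j. \<bar>x j\<bar> * v j) ` {1..d}))" by simp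
  show "y \<le> max t (v i)" if "y \<in> insert \<bar>x 0\<bar> ((\<lambda>j. \<bar>x j\<bar> * v j) ` {1..d})" for y
  proof -
    from that consider "y = \<bar>x 0\<bar>" | j where "j \<in> {1..d}" "y = \<bar>x j\<bar> * v j" by auto
    then show ?thesis
    proof cases
      case 1 then show ?thesis using x0 t by simp
    next
      case 2
      then show ?thesis using xi xo[of j] t by (cases "j = i") auto
    qed
  qed
  have "v i \<in> (\<lambda>j. \<bar>x j\<bar> * v j) ` {1..d}" using i xi by (force intro: image_eqI[where x=i])
  then show "max t (v i) \<in> insert \<bar>x 0\<bar> ((\<lambda>j. \<bar>x j\<bar> * v j) ` {1..d})"
    using x0 t by (auto simp: max_def)
qed

lemma partB:
  assumes H: "cond_H d P" and hyp: "\<forall>x. F_norm d P x = sup_norm d x"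
  shows "AE z in P. \<forall>i\<in>{1..d}. z i = 1"
proof -
  have ps: "prob_space P" and sP: "sets P = sets (vec_space d)" using H by (auto simp: cond_H_def)
  interpret prob_space P by (rule ps)
  have "\<forall>i\<in>{1..d}. AE z in P. z i = 1"
  proof
    fix i assume i: "i \<in> {1..d}"
    have nn: "AE z in P. 0 \<le> z i" and intg: "integrable P (\<lambda>z. z i)"
      using H i by (auto simp: cond_H_def)
    note zm[measurable] = zi_meas[OF sP i]
    define x1 where "x1 = (\<lambda>j::nat. if j = i then 1 else (0::real))"
    have x1p: "x1 0 = 0" "x1 i = 1" "\<And>j. j \<noteq> 0 \<Longrightarrow> j \<noteq> i \<Longrightarrow> x1 j = 0"
      using i by (auto simp: x1_def)
    have "F_norm d P x1 = (\<integral>z. max 0 (z i) \<partial>P)"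
      unfolding F_norm_def using Max_ei[OF i order.refl x1p] by simp
    also have "\<dots> = (\<integral>z. z i \<partial>P)"
      by (rule integral_cong_AE) (use nn in auto)
    finally have e1: "F_norm d P x1 = (\<integral>z. z i \<partial>P)" .
    have "sup_norm d x1 = Max (insert \<bar>x1 0\<bar> ((\<lambda>j. \<bar>x1 j\<bar> * 1) ` {1..d}))"
      unfolding sup_norm_Max by simp
    also have "\<dots> = 1" using Max_ei[OF i order.refl x1p, of "\<lambda>_. 1"] by simp
    finally have int1: "(\<integral>z. z i \<partial>P) = 1" using hyp e1 by simp
    define x2 where "x2 = (\<lambda>j::nat. (1::real))"
    define M where "M = (\<lambda>z::nat\<Rightarrow>real. Max (insert 1 (z ` {1..d})))"
    have Mm[measurable]: "M \<in> borel_measurable P"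
    proof -
      have "(\<lambda>v. Max (insert \<bar>x2 0\<bar> ((\<lambda>i. \<bar>x2 i\<bar> * v i) ` {1..d}))) \<in> borel_measurable P"
        using Fx_meas by (subst measurable_cong_sets[OF sP refl])
      then show ?thesis by (simp add: M_def x2_def)
    qed
    have "F_norm d P x2 = integral\<^sup>L P M" by (simp add: F_norm_def M_def x2_def)
    moreover have "sup_norm d x2 = 1"
    proof -
      have "Max (insert 1 ((\<lambda>i::nat. 1::real) ` {1..d})) = 1" by (rule Max_eqI) auto
      then show ?thesis unfolding sup_norm_Max x2_def abs_one .
    qed
    ultimately have IM: "integral\<^sup>L P M = 1" using hyp by simp
    then have iM: "integrable P M" using not_integrable_integral_eq by fastforce
    have M1: "1 \<le> M z" for z
      unfolding M_def by (rule Max_ge) auto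
    have Mi: "z i \<le> M z" for z
      unfolding M_def by (rule Max_ge) (use i in auto)
    have "(\<integral>z. M z - 1 \<partial>P) = 0" using IM iM by (simp add: prob_space)
    moreover have "(\<integral>z. M z - 1 \<partial>P) = 0 \<longleftrightarrow> (AE z in P. M z - 1 = 0)"
      by (rule integral_nonneg_eq_0_iff_AE) (use iM M1 in auto)
    ultimately have "AE z in P. M z = 1" by auto
    then have "AE z in P. z i \<le> 1" by eventually_elim (use Mi in metis)
    then show "AE z in P. z i = 1" by (rule le1_to_eq1[OF H i _ int1])
  qed
  then show ?thesis by (subst AE_ball_countable) (auto intro: countable_finite)
qed

lemma enn_max0: "ennreal (max 0 a) = ennreal a"
  by (cases "0 \<le> a") (auto simp: max_def ennreal_neg)

lemma enn_max_split:
  assumes "0 \<le> t" shows "ennreal (max t a) = ennreal t + ennreal (a - t)"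
proof (cases "a \<le> t")
  case True then show ?thesis by (simp add: ennreal_neg)
next
  case False
  then have "ennreal (t + (a - t)) = ennreal t + ennreal (a - t)" using assms by (intro ennreal_plus) auto
  then show ?thesis using False by simp
qed

lemma partC:
  assumes H: "cond_H d P" and hyp: "\<forall>x. F_norm d (prod_dist d P P) x = F_norm d P x"
    and i: "i \<in> {1..d}"
  shows "AE z in P. z i = 1"
proof -
  have ps: "prob_space P" and sP: "sets P = sets (vec_space d)" using H by (auto simp: cond_H_def)
  have nn: "AE z in P. 0 \<le> z i" and intg: "integrable P (\<lambda>z. z i)" and mpos: "0 < (\<integral>z. z i \<partial>P)"
    using H i by (auto simp: cond_H_def)
  interpret prob_space P by (rule ps)
  note zm[measurable] = zi_meas[OF sP i]
  have pm[measurable]: "(\<lambda>p::(nat\<Rightarrow>real)\<times>(nat\<Rightarrow>real). fst p i * snd p i) \<in> borel_measurable (P \<Otimes>\<^sub>M P)"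
    by measurable
  define m where "m = (\<integral>z. z i \<partial>P)"
  have I1: "(\<integral>\<^sup>+ w. ennreal (w i) \<partial>P) = ennreal m"
    unfolding m_def by (rule nn_integral_eq_integral[OF intg nn])
  have m0: "0 \<le> m" using mpos m_def by simp
  have E: "enn2real (\<integral>\<^sup>+ z. \<integral>\<^sup>+ w. ennreal (max t (z i * w i)) \<partial>P \<partial>P) = enn2real (\<integral>\<^sup>+ z. ennreal (max t (z i)) \<partial>P)"
    if t: "0 \<le> t" for t
  proof -
    define x where "x = (\<lambda>j::nat. if j = 0 then t else if j = i then 1 else 0)"
    have xp: "x 0 = t" "x i = 1" "\<And>j. j \<noteq> 0 \<Longrightarrow> j \<noteq> i \<Longrightarrow> x j = 0" using i by (auto simp: x_def)
    have "F_norm d (prod_dist d P P) x = F_norm d P x" using hyp by simp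
    then have ee: "enn2real (\<integral>\<^sup>+ z. \<integral>\<^sup>+ w. ennreal (Max (insert \<bar>x 0\<bar> ((\<lambda>j. \<bar>x j\<bar> * (z j * w j)) ` {1..d}))) \<partial>P \<partial>P)
      = enn2real (\<integral>\<^sup>+ z. ennreal (Max (insert \<bar>x 0\<bar> ((\<lambda>j. \<bar>x j\<bar> * z j) ` {1..d}))) \<partial>P)"
      unfolding F_prod_nn[OF H] F_P_nn[OF sP] .
    have m1: "Max (insert \<bar>x 0\<bar> ((\<lambda>j. \<bar>x j\<bar> * (z j * w j)) ` {1..d})) = max t (z i * w i)" for z w :: "nat \<Rightarrow> real"
      by (rule Max_ei[OF i t xp])
    have m2: "Max (insert \<bar>x 0\<bar> ((\<lambda>j. \<bar>x j\<bar> * z j) ` {1..d})) = max t (z i)" for z :: "nat \<Rightarrow> real"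
      by (rule Max_ei[OF i t xp])
    show ?thesis using ee unfolding m1 m2 .
  qed
  have inner0: "(\<integral>\<^sup>+ w. ennreal (z i * w i) \<partial>P) = ennreal (z i) * ennreal m" if "0 \<le> z i" for z
  proof -
    have "(\<integral>\<^sup>+ w. ennreal (z i * w i) \<partial>P) = (\<integral>\<^sup>+ w. ennreal (z i) * ennreal (w i) \<partial>P)"
      using that by (simp add: ennreal_mult')
    also have "\<dots> = ennreal (z i) * ennreal m" by (simp add: nn_integral_cmult I1)
    finally show ?thesis .
  qed
  have "(\<integral>\<^sup>+ z. \<integral>\<^sup>+ w. ennreal (max 0 (z i * w i)) \<partial>P \<partial>P) = (\<integral>\<^sup>+ z. ennreal (z i) * ennreal m \<partial>P)"
    by (rule nn_integral_cong_AE) (use nn in \<open>eventually_elim, simp add: enn_max0 inner0\<close>)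
  also have "\<dots> = ennreal m * ennreal m" by (simp add: nn_integral_multc I1)
  also have "\<dots> = ennreal (m * m)" using m0 by (simp add: ennreal_mult)
  finally have L0: "(\<integral>\<^sup>+ z. \<integral>\<^sup>+ w. ennreal (max 0 (z i * w i)) \<partial>P \<partial>P) = ennreal (m * m)" .
  have R0: "(\<integral>\<^sup>+ z. ennreal (max 0 (z i)) \<partial>P) = ennreal m" by (simp add: enn_max0 I1)
  have "m * m = m" using E[of 0] L0 R0 m0 by simp
  then have m1: "m = 1" using mpos m_def by (metis mult_cancel_right2 less_irrefl)
  have I1': "(\<integral>\<^sup>+ w. ennreal (w i) \<partial>P) = 1" using I1 m1 by simp
  define G where "G = (\<lambda>t (z::nat\<Rightarrow>real). \<integral>\<^sup>+ w. ennreal (max t (z i * w i)) \<partial>P)"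
  have Gm[measurable]: "G t \<in> borel_measurable P" for t
    unfolding G_def by measurable
  have AEG: "AE z in P. G t z = ennreal (max t (z i))" if t: "0 \<le> t" for t
  proof -
    have lower: "ennreal (max t (z i)) \<le> G t z" if zi: "0 \<le> z i" for z
    proof -
      have a: "ennreal t \<le> G t z"
      proof -
        have "ennreal t = (\<integral>\<^sup>+ w. ennreal t \<partial>P)" by (simp add: emeasure_space_1)
        also have "\<dots> \<le> G t z" unfolding G_def by (rule nn_integral_mono) (simp add: ennreal_leI)
        finally show ?thesis .
      qed
      have b: "ennreal (z i) \<le> G t z"
      proof -
        have "ennreal (z i) = (\<integral>\<^sup>+ w. ennreal (z i * w i) \<partial>P)" using inner0[of z, OF zi] m1 by simp
        also have "\<dots> \<le> G t z" unfolding G_def by (rule nn_integral_mono) (simp add: ennreal_leI)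
        finally show ?thesis .
      qed
      show ?thesis using a b by (cases "t \<le> z i") (auto simp: max_def)
    qed
    have imax: "integrable P (\<lambda>z. max t (z i))" using intg by auto
    have A: "(\<integral>\<^sup>+ z. ennreal (max t (z i)) \<partial>P) = ennreal (\<integral>z. max t (z i) \<partial>P)"
      by (rule nn_integral_eq_integral[OF imax]) (use t in auto)
    have Apos: "1 \<le> (\<integral>z. max t (z i) \<partial>P)"
    proof -
      have "(\<integral>z. z i \<partial>P) \<le> (\<integral>z. max t (z i) \<partial>P)" by (rule integral_mono[OF intg imax]) auto
      then show ?thesis using m1 m_def by simp
    qed
    have BA: "(\<integral>\<^sup>+ z. ennreal (max t (z i)) \<partial>P) \<le> (\<integral>\<^sup>+ z. G t z \<partial>P)"
      by (rule nn_integral_mono_AE) (use nn lower in auto)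
    have EB: "enn2real (\<integral>\<^sup>+ z. G t z \<partial>P) = (\<integral>z. max t (z i) \<partial>P)"
      using E[OF t] A Apos unfolding G_def by simp
    have Bfin: "(\<integral>\<^sup>+ z. G t z \<partial>P) \<noteq> \<infinity>" using EB Apos by auto
    have BeqA: "(\<integral>\<^sup>+ z. G t z \<partial>P) = (\<integral>\<^sup>+ z. ennreal (max t (z i)) \<partial>P)"
      using ennreal_enn2real[of "integral\<^sup>N P (G t)"] Bfin EB A by (simp add: less_top)
    have "(\<integral>\<^sup>+ z. G t z - ennreal (max t (z i)) \<partial>P) = (\<integral>\<^sup>+ z. G t z \<partial>P) - (\<integral>\<^sup>+ z. ennreal (max t (z i)) \<partial>P)"
      by (rule nn_integral_diff) (use A nn lower in auto)
    also have "\<dots> = 0" unfolding BeqA A by (simp add: ennreal_minus)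
    finally have "AE z in P. G t z - ennreal (max t (z i)) = 0"
      by (subst (asm) nn_integral_0_iff_AE) auto
    then show ?thesis using nn
      by eventually_elim (metis ennreal_minus_eq_0 lower order.antisym)
  qed
  have "AE z in P. \<forall>q::rat. 0 \<le> (of_rat q::real) \<longrightarrow> G (of_rat q) z = ennreal (max (of_rat q) (z i))"
  proof (subst AE_all_countable, intro allI)
    fix q :: rat
    show "AE z in P. 0 \<le> (of_rat q::real) \<longrightarrow> G (of_rat q) z = ennreal (max (of_rat q) (z i))"
    proof (cases "0 \<le> (of_rat q :: real)")
      case True
      show ?thesis using AEG[OF True] by eventually_elim auto
    next
      case False
      show ?thesis by (rule AE_I2) (use False in auto)
    qed
  qed
  then have AEQ: "AE z in P. 0 \<le> z i \<and> (\<forall>q::rat. 0 \<le> (of_rat q::real) \<longrightarrow> G (of_rat q) z = ennreal (max (of_rat q) (z i)))"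
    using nn by eventually_elim auto
  obtain z0 where z0: "0 < z0 i" "\<forall>q::rat. 0 \<le> (of_rat q::real) \<longrightarrow> G (of_rat q) z0 = ennreal (max (of_rat q) (z0 i))"
  proof (rule ccontr)
    assume nt: "\<not> thesis"
    have "AE z in P. z i = 0" using AEQ
    proof eventually_elim
      case (elim z)
      show ?case
      proof (rule ccontr)
        assume "z i \<noteq> 0"
        then have "0 < z i" using elim by auto
        then show False using that[of z] elim nt by auto
      qed
    qed
    then have "(\<integral>z. z i \<partial>P) = (\<integral>z. 0 \<partial>P)" by (intro integral_cong_AE) auto
    then show False using mpos by simp
  qed
  define y where "y = z0 i"
  have ypos: "0 < y" using z0 y_def by simp
  have bound: "AE w in P. y * w i \<le> of_rat q" if q: "y < of_rat q" for q :: rat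
  proof -
    define t :: real where "t = of_rat q"
    have t0: "0 \<le> t" using q ypos t_def by linarith
    have "G t z0 = ennreal t" using z0(2) t0 q by (simp add: t_def y_def max_def)
    moreover have "G t z0 = ennreal t + (\<integral>\<^sup>+ w. ennreal (y * w i - t) \<partial>P)"
    proof -
      have "G t z0 = (\<integral>\<^sup>+ w. ennreal t + ennreal (y * w i - t) \<partial>P)"
        unfolding G_def y_def using enn_max_split[OF t0] by simp
      also have "\<dots> = (\<integral>\<^sup>+ w. ennreal t \<partial>P) + (\<integral>\<^sup>+ w. ennreal (y * w i - t) \<partial>P)"
        by (rule nn_integral_add) auto
      finally show ?thesis by (simp add: emeasure_space_1)
    qed
    ultimately have "ennreal t + (\<integral>\<^sup>+ w. ennreal (y * w i - t) \<partial>P) = ennreal t + 0" by simp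
    then have "(\<integral>\<^sup>+ w. ennreal (y * w i - t) \<partial>P) = 0" by (simp add: ennreal_add_left_cancel)
    then have "AE w in P. ennreal (y * w i - t) = 0" by (subst (asm) nn_integral_0_iff_AE) auto
    then show ?thesis by eventually_elim (simp add: ennreal_eq_0_iff t_def)
  qed
  have "AE w in P. \<forall>q::rat. y < of_rat q \<longrightarrow> y * w i \<le> of_rat q"
  proof (subst AE_all_countable, intro allI)
    fix q :: rat
    show "AE w in P. y < of_rat q \<longrightarrow> y * w i \<le> of_rat q"
    proof (cases "y < (of_rat q :: real)")
      case True
      show ?thesis using bound[OF True] by eventually_elim auto
    next
      case False
      show ?thesis by (rule AE_I2) (use False in auto)
    qed
  qed
  then have "AE w in P. w i \<le> 1"
  proof eventually_elim
    case (elim w)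
    show ?case
    proof (rule ccontr)
      assume "\<not> w i \<le> 1"
      then have "y < y * w i" using ypos by simp
      then obtain q :: rat where "y < of_rat q" "of_rat q < y * w i" using of_rat_dense by blast
      then show False using elim by force
    qed
  qed
  then show ?thesis by (rule le1_to_eq1[OF H i]) (use m1 m_def in simp)
qed

theorem proposition4p7:
  fixes d :: nat and P :: "(nat \<Rightarrow> real) measure"
  assumes "cond_H d P"
  shows "(\<forall>x. F_norm d (prod_dist d P P) x = F_norm d P x)
         \<longleftrightarrow> (\<forall>x. F_norm d P x = sup_norm d x)"
proof
  assume hyp: "\<forall>x. F_norm d (prod_dist d P P) x = F_norm d P x"
  have "\<forall>i\<in>{1..d}. AE z in P. z i = 1" using partC[OF assms hyp] by blast
  then have "AE z in P. \<forall>i\<in>{1..d}. z i = 1"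
    by (subst AE_ball_countable) (auto intro: countable_finite)
  then show "\<forall>x. F_norm d P x = sup_norm d x" using partA(1)[OF assms] by blast
next
  assume hyp: "\<forall>x. F_norm d P x = sup_norm d x"
  have ae: "AE z in P. \<forall>i\<in>{1..d}. z i = 1" by (rule partB[OF assms hyp])
  show "\<forall>x. F_norm d (prod_dist d P P) x = F_norm d P x"
    using partA[OF assms ae] by simp
qed

end
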